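(* Let $k\in\mathbb{Z}$, and let $S=\{a_i \bmod d_i : 1\le i\le r\}$ and $S'=\{-a_i+(d_i-1)k \bmod d_i : 1\le i\le r\}$ be exact covering systems. Then the map $\phi_{2,k}:\mathbb{Z}\to\mathbb{Z}$, $\phi_{2,k}(n)=-(n+k)$, is a graph isomorphism from $G_S$ to $G_{S'}$.
   Context: A system of congruences $\{a_i \bmod d_i : 1\le i\le r\}$ with integers $a_i$ and nonzero integers $d_i$ (negative $d_i$ allowed; $n\equiv a \bmod -d$ means $n\equiv a\bmod d$) is an exact covering system if every integer satisfies exactly one of the congruences; congruences are distinguished by their chosen representatives. For such a system $S$, the exact covering system digraph $G_S$ has vertex set $\mathbb{Z}$ and edges $(n,d_in+a_i)$ for all $n\in\mathbb{Z}$, $1\le i\le r$. *)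

theory Defs
  imports Main
begin

text \<open>A system of congruences is a list of pairs (a_i, d_i), meaning n = a_i mod d_i.
  Congruences are distinguished by their position in the list (representatives).\<close>

definition exact_covering_system :: "(int \<times> int) list \<Rightarrow> bool" where
  "exact_covering_system S \<longleftrightarrow>
     (\<forall>i < length S. snd (S ! i) \<noteq> 0) \<and>
     (\<forall>n::int. card {i. i < length S \<and> snd (S ! i) dvd (n - fst (S ! i))} = 1)"

definition ecs_edges :: "(int \<times> int) list \<Rightarrow> (int \<times> int) set" where
  "ecs_edges S = {(n, snd (S ! i) * n + fst (S ! i)) | n i. i < length S}"

definition digraph_iso :: "(int \<Rightarrow> int) \<Rightarrow> (int \<times> int) set \<Rightarrow> (int \<times> int) set \<Rightarrow> bool" where
  "digraph_iso f E E' \<longleftrightarrow> bij f \<and> (\<forall>u v. (u, v) \<in> E \<longleftrightarrow> (f u, f v) \<in> E')"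

end

theory Submission
  imports Defs
begin

theorem mainTheorem8:
  fixes k :: int and S :: "(int \<times> int) list"
  assumes "exact_covering_system S"
    and "exact_covering_system (map (\<lambda>(a, d). (- a + (d - 1) * k, d)) S)"
  shows "digraph_iso (\<lambda>n. - (n + k)) (ecs_edges S)
           (ecs_edges (map (\<lambda>(a, d). (- a + (d - 1) * k, d)) S))"
proof -
  let ?f = "\<lambda>n::int. - (n + k)"
  let ?T = "map (\<lambda>(a, d). (- a + (d - 1) * k, d)) S"
  have bij: "bij ?f"
    by (rule bij_betw_byWitness[where f'="?f"]) auto
  have key: "(u, v) \<in> ecs_edges S \<longleftrightarrow> (?f u, ?f v) \<in> ecs_edges ?T" for u v
  proof
    assume "(u, v) \<in> ecs_edges S"
    then obtain i where i: "i < length S" "v = snd (S ! i) * u + fst (S ! i)"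
      unfolding ecs_edges_def by auto
    obtain a d where ad: "S ! i = (a, d)" by fastforce
    have "?f v = snd (?T ! i) * ?f u + fst (?T ! i)"
      using i ad by (simp add: algebra_simps)
    then show "(?f u, ?f v) \<in> ecs_edges ?T"
      unfolding ecs_edges_def using i by force
  next
    assume "(?f u, ?f v) \<in> ecs_edges ?T"
    then obtain i where i: "i < length S" "?f v = snd (?T ! i) * ?f u + fst (?T ! i)"
      unfolding ecs_edges_def by auto
    obtain a d where ad: "S ! i = (a, d)" by fastforce
    have "v = snd (S ! i) * u + fst (S ! i)"
      using i ad by (simp add: algebra_simps)
    then show "(u, v) \<in> ecs_edges S"
      unfolding ecs_edges_def using i by force
  qed
  show ?thesis unfolding digraph_iso_def using bij key by blast
qed

end
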